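(* Let $r\ge 2$, $k\ge 3$, $m\ge 2$ be integers. (1) If there is a coloring of $\mathbb{Z}_m$ with $r$ colors containing no nontrivial monochromatic $k$-AP, then there is a constant $C$ (depending on $m,k$) such that for every $n$ there is a coloring of $[n]$ with $r$ colors whose number $N$ of monochromatic $k$-APs satisfies $\left|N-\frac{1}{2m(k-1)}n^2\right|\le Cn$. (2) If there is a coloring of $\mathbb{Z}_m\setminus\{0\}$ with $r$ colors such that, for each of the $r$ possible choices of color for $0$, the resulting coloring of $\mathbb{Z}_m$ contains no nontrivial monochromatic $k$-AP, then there is a constant $C$ (depending on $m,k$) such that for every $n$ there is a coloring of $[n]$ with $r$ colors whose number $N$ of monochromatic $k$-APs satisfies $\left|N-\frac{1}{2(m+1)(k-1)}n^2\right|\le Cn$.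
   Context: A $k$-AP in $[n]=\{1,\ldots,n\}$ is a sequence $a,a+d,\ldots,a+(k-1)d$ of elements of $[n]$ with integer $d\ge 1$. A $k$-AP in $\mathbb{Z}_m$ is a sequence $a,a+d,\ldots,a+(k-1)d$ with $a,d\in\mathbb{Z}_m$ (arithmetic mod $m$); it is trivial if $d\equiv 0\pmod m$ (i.e., all terms are equal) and nontrivial otherwise. A progression is monochromatic if all its terms receive the same color. *)

theory Defs
  imports Complex_Main
begin

text \<open>Colorings of Z_m are functions on the representatives 0..m-1; colors are 0..r-1.
  The k-AP a, a+d, ..., a+(k-1)d in Z_m has terms (a + i*d) mod m, with a, d in 0..m-1;
  it is nontrivial iff d is nonzero mod m.\<close>

definition no_nontriv_mono_AP_Zm :: "nat \<Rightarrow> nat \<Rightarrow> (nat \<Rightarrow> nat) \<Rightarrow> bool" where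
  "no_nontriv_mono_AP_Zm m k f \<longleftrightarrow>
     \<not> (\<exists>a<m. \<exists>d<m. d \<noteq> 0 \<and>
           (\<forall>i<k. \<forall>j<k. f ((a + i * d) mod m) = f ((a + j * d) mod m)))"

definition mono_AP_count :: "nat \<Rightarrow> nat \<Rightarrow> (nat \<Rightarrow> nat) \<Rightarrow> nat" where
  "mono_AP_count n k g = card {(a, d). 1 \<le> a \<and> 1 \<le> d \<and> a + (k - 1) * d \<le> n \<and>
       (\<forall>i<k. \<forall>j<k. g (a + i * d) = g (a + j * d))}"

end

theory Submission
  imports Defs
begin



definition Sc :: "nat \<Rightarrow> nat \<Rightarrow> nat" where
  "Sc L n = card {(a,t). 1 \<le> a \<and> 1 \<le> t \<and> a + L*t \<le> n}"

lemma fin_pairs: "finite {(a::nat,d::nat). 1 \<le> d \<and> a + K*d \<le> n \<and> P a d}" if "K \<ge> 1"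
proof (rule finite_subset[of _ "{..n} \<times> {..n}"])
  have h: "a \<le> n \<and> d \<le> n" if "1 \<le> d" "a + K*d \<le> n" for a d
  proof -
    have "d \<le> K*d" using \<open>K \<ge> 1\<close> by simp
    then show ?thesis using that by linarith
  qed
  show "{(a::nat,d::nat). 1 \<le> d \<and> a + K*d \<le> n \<and> P a d} \<subseteq> {..n} \<times> {..n}"
    using h by auto
qed auto

lemma Sc_Suc: assumes "L \<ge> 1" shows "Sc L (Suc n) = Sc L n + n div L"
proof -
  let ?A = "{(a,t). 1 \<le> a \<and> 1 \<le> t \<and> a + L*t \<le> n}"
  let ?B = "{(a,t). 1 \<le> a \<and> 1 \<le> t \<and> a + L*t = Suc n}"
  have eq: "{(a,t). 1 \<le> a \<and> 1 \<le> t \<and> a + L*t \<le> Suc n} = ?A \<union> ?B" by auto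
  have B: "?B = (\<lambda>t. (Suc n - L*t, t)) ` {1..n div L}"
  proof (rule set_eqI, rule iffI)
    fix x assume "x \<in> ?B"
    then obtain a t where x: "x = (a,t)" "1 \<le> a" "1 \<le> t" "a + L*t = Suc n" by auto
    then have "t * L \<le> n" by (simp add: mult.commute)
    then have "t \<le> n div L" using assms by (simp add: less_eq_div_iff_mult_less_eq)
    then show "x \<in> (\<lambda>t. (Suc n - L*t, t)) ` {1..n div L}" using x
      by (auto intro!: image_eqI[of _ _ t])
  next
    fix x assume "x \<in> (\<lambda>t. (Suc n - L*t, t)) ` {1..n div L}"
    then obtain t where t: "x = (Suc n - L*t, t)" "1 \<le> t" "t \<le> n div L" by auto
    have "t * L \<le> n" using t(3) assms by (simp add: less_eq_div_iff_mult_less_eq)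
    then show "x \<in> ?B" using t by (auto simp: mult.commute)
  qed
  have cB: "card ?B = n div L" unfolding B by (subst card_image) (auto simp: inj_on_def)
  have fA: "finite ?A" using fin_pairs[of L n "\<lambda>a t. 1 \<le> a"] assms
    by (rule_tac finite_subset[OF _ fin_pairs[of L n "\<lambda>a t. 1 \<le> a"]]) auto
  have fB: "finite ?B" unfolding B by simp
  have "?A \<inter> ?B = {}" by auto
  then show ?thesis unfolding Sc_def eq using fA fB cB by (simp add: card_Un_disjoint)
qed

lemma div_bounds: assumes "L \<ge> (1::nat)"
  shows "real n / L - 1 \<le> real (n div L)" "real (n div L) \<le> real n / L"
proof -
  have e: "real n = real L * real (n div L) + real (n mod L)"
    by (metis of_nat_add of_nat_mult div_mult_mod_eq mult.commute)
  have "real (n mod L) < real L" using assms by simp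
  have Lp: "real L > 0" using assms by simp
  have q: "real n / L = real (n div L) + real (n mod L) / L"
    using Lp by (subst e) (simp add: field_simps)
  have "real (n mod L) / L < 1" using \<open>real (n mod L) < real L\<close> Lp by simp
  moreover have "real (n mod L) / L \<ge> 0" by simp
  ultimately show "real n / L - 1 \<le> real (n div L)" "real (n div L) \<le> real n / L" using q by linarith+
qed

lemma Sc_bounds: assumes "L \<ge> 1"
  shows "real n * (real n - 1) / (2 * L) - n \<le> Sc L n \<and> real (Sc L n) \<le> real n * (real n - 1) / (2 * L)"
proof (induction n)
  case 0
  have "{(a,t). 1 \<le> a \<and> 1 \<le> t \<and> a + L*t \<le> (0::nat)} = {}" by auto
  then show ?case by (simp only: Sc_def) simp
next
  case (Suc n)
  have Lp: "real L > 0" using assms by simp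
  have d: "real (Suc n) * (real (Suc n) - 1) / (2 * L) = real n * (real n - 1) / (2 * L) + real n / L"
    using Lp by (simp add: field_simps)
  have eS: "real (Sc L (Suc n)) = real (Sc L n) + real (n div L)" using Sc_Suc[OF assms] by simp
  show ?case using Suc div_bounds[OF assms, of n] d eS by linarith
qed

lemma Sc_abs: assumes "L \<ge> 1" shows "\<bar>real (Sc L n) - real n ^ 2 / (2 * real L)\<bar> \<le> 2 * real n"
proof -
  have Lp: "real L \<ge> 1" using assms by simp
  have e: "real n * (real n - 1) / (2 * L) = real n ^ 2 / (2*real L) - real n / (2*real L)"
    using Lp by (simp add: field_simps power2_eq_square)
  have "real n / (2*real L) \<le> real n" using Lp
    by (simp add: divide_le_eq mult_le_cancel_left1)
  moreover have "real n / (2*real L) \<ge> 0" by simp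
  ultimately show ?thesis unfolding abs_le_iff using Sc_bounds[OF assms, of n] e by linarith
qed



lemma D_card: assumes "m \<ge> (1::nat)" "K \<ge> 1"
  shows "card {(a,d). 1 \<le> a \<and> 1 \<le> d \<and> a + K*d \<le> n \<and> m dvd d} = Sc (K*m) n"
proof -
  have "{(a,d). 1 \<le> a \<and> 1 \<le> d \<and> a + K*d \<le> n \<and> m dvd d}
      = (\<lambda>(a,t). (a, m*t)) ` {(a,t). 1 \<le> a \<and> 1 \<le> t \<and> a + (K*m)*t \<le> n}"
  proof (rule set_eqI, rule iffI)
    fix x assume "x \<in> {(a,d). 1 \<le> a \<and> 1 \<le> d \<and> a + K*d \<le> n \<and> m dvd d}"
    then obtain a d t where x: "x = (a,d)" "1 \<le> a" "1 \<le> d" "a + K*d \<le> n" "d = m*t" by auto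
    then have "1 \<le> t" by (cases t) auto
    then show "x \<in> (\<lambda>(a,t). (a, m*t)) ` {(a,t). 1 \<le> a \<and> 1 \<le> t \<and> a + (K*m)*t \<le> n}"
      using x by (auto simp: mult.assoc intro!: image_eqI[of _ _ "(a,t)"])
  next
    fix x assume "x \<in> (\<lambda>(a,t). (a, m*t)) ` {(a,t). 1 \<le> a \<and> 1 \<le> t \<and> a + (K*m)*t \<le> n}"
    then obtain a t where x: "x = (a, m*t)" "1 \<le> a" "1 \<le> t" "a + (K*m)*t \<le> n" by auto
    have "1 \<le> m*t" using x assms by simp
    then show "x \<in> {(a,d). 1 \<le> a \<and> 1 \<le> d \<and> a + K*d \<le> n \<and> m dvd d}"
      using x by (auto simp: mult.assoc)
  qed
  then show ?thesis unfolding Sc_def by (simp only:) (rule card_image, use assms in \<open>auto simp: inj_on_def\<close>)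
qed


lemma DD_card: assumes "m \<ge> (1::nat)" "K \<ge> 1"
  shows "card {(a,d). 1 \<le> a \<and> 1 \<le> d \<and> a + K*d \<le> n \<and> m dvd a \<and> m dvd d} = Sc K (n div m)"
proof -
  have le: "(m*(a + K*t) \<le> n) = (a + K*t \<le> n div m)" for a t
    using assms by (simp add: less_eq_div_iff_mult_less_eq mult.commute)
  have "{(a,d). 1 \<le> a \<and> 1 \<le> d \<and> a + K*d \<le> n \<and> m dvd a \<and> m dvd d}
      = (\<lambda>(a,t). (m*a, m*t)) ` {(a,t). 1 \<le> a \<and> 1 \<le> t \<and> a + K*t \<le> n div m}"
  proof (rule set_eqI, rule iffI)
    fix x assume "x \<in> {(a,d). 1 \<le> a \<and> 1 \<le> d \<and> a + K*d \<le> n \<and> m dvd a \<and> m dvd d}"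
    then obtain a d where x0: "x = (a,d)" "1 \<le> a" "1 \<le> d" "a + K*d \<le> n" "m dvd d" "m dvd a" by auto
    then obtain s t where st: "d = m*t" "a = m*s" by (meson dvdE)
    note x = x0 st
    have "1 \<le> t" using x by (cases t) auto
    moreover have "1 \<le> s" using x by (cases s) auto
    moreover have "m*(s + K*t) \<le> n" using x by (simp add: algebra_simps)
    ultimately show "x \<in> (\<lambda>(a,t). (m*a, m*t)) ` {(a,t). 1 \<le> a \<and> 1 \<le> t \<and> a + K*t \<le> n div m}"
      using x le by (auto intro!: image_eqI[of _ _ "(s,t)"])
  next
    fix x assume "x \<in> (\<lambda>(a,t). (m*a, m*t)) ` {(a,t). 1 \<le> a \<and> 1 \<le> t \<and> a + K*t \<le> n div m}"
    then obtain a t where x: "x = (m*a, m*t)" "1 \<le> a" "1 \<le> t" "a + K*t \<le> n div m" by auto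
    have "1 \<le> m*t" "1 \<le> m*a" using x assms by simp_all
    moreover have "m*a + K*(m*t) \<le> n" using x(4) le[of a t] by (simp add: algebra_simps)
    ultimately show "x \<in> {(a,d). 1 \<le> a \<and> 1 \<le> d \<and> a + K*d \<le> n \<and> m dvd a \<and> m dvd d}"
      using x by auto
  qed
  then show ?thesis unfolding Sc_def by (simp only:) (rule card_image, use assms in \<open>auto simp: inj_on_def\<close>)
qed


lemma mod_ap: "((a::nat) + i*d) mod m = (a mod m + i*(d mod m)) mod m"
  by (metis mod_add_eq mod_mult_right_eq mod_mod_trivial)

lemma not_mono_Zm: assumes "no_nontriv_mono_AP_Zm m k f" "m \<ge> 1" "\<not> m dvd d"
  "\<forall>i<k. \<forall>j<k. f ((a+i*d) mod m) = f ((a+j*d) mod m)" shows False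
proof -
  have "a mod m < m" "d mod m < m" using assms(2) by auto
  moreover have "d mod m \<noteq> 0" using assms(3) mod_eq_0_iff_dvd by blast
  ultimately
  have "\<not> (\<forall>i<k. \<forall>j<k. f ((a mod m + i*(d mod m)) mod m) = f ((a mod m + j*(d mod m)) mod m))"
    using assms(1) unfolding no_nontriv_mono_AP_Zm_def by blast
  then show False using assms(4) by (simp only: mod_ap[symmetric])
qed

function g2 :: "nat \<Rightarrow> (nat \<Rightarrow> nat) \<Rightarrow> nat \<Rightarrow> nat" where
  "g2 m f x = (if x = 0 \<or> m < 2 then 0 else if x mod m \<noteq> 0 then f (x mod m) else g2 m f (x div m))"
  by auto
termination by (relation "measure (\<lambda>(m,f,x). x)") auto

declare g2.simps[simp del]

lemma g2_eq: "g2 m f x = (if x = 0 \<or> m < 2 then 0 else if x mod m \<noteq> 0 then f (x mod m) else g2 m f (x div m))"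
  by (rule g2.simps)

lemma g2_lt: assumes "\<forall>x\<in>{1..<m}. f x < r" "r > 0" shows "g2 m f x < r"
proof (induction x rule: less_induct)
  case (less x)
  show ?case
  proof (cases "x = 0 \<or> m < 2")
    case True
    have "g2 m f x = 0" using True by (subst g2_eq) simp
    then show ?thesis using assms by simp
  next
    case False
    then have "x div m < x" by auto
    then have h: "g2 m f (x div m) < r" using less by blast
    have "x mod m < m" using False by simp
    then have h2: "x mod m \<noteq> 0 \<Longrightarrow> f (x mod m) < r" using assms(1) by auto
    have "g2 m f x = (if x mod m \<noteq> 0 then f (x mod m) else g2 m f (x div m))"
      using False by (subst g2_eq) simp
    then show ?thesis using h h2 by simp
  qed
qed

lemma g2_nz: assumes "x > 0" "m \<ge> 2" "x mod m \<noteq> 0" shows "g2 m f x = f (x mod m)"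
proof -
  have "g2 m f x = (if x = 0 \<or> m < 2 then 0 else if x mod m \<noteq> 0 then f (x mod m) else g2 m f (x div m))"
    by (rule g2_eq)
  also have "\<dots> = f (x mod m)" using assms by simp
  finally show ?thesis .
qed

lemma g2_mult: assumes "y > 0" "m \<ge> 2" shows "g2 m f (m*y) = g2 m f y"
proof -
  have a: "m*y \<noteq> 0" "(m*y) mod m = 0" "(m*y) div m = y" using assms by auto
  have "g2 m f (m*y) = (if m*y = 0 \<or> m < 2 then 0 else if (m*y) mod m \<noteq> 0 then f ((m*y) mod m) else g2 m f ((m*y) div m))"
    by (rule g2_eq)
  also have "\<dots> = g2 m f y" using a assms by simp
  finally show ?thesis .
qed

lemma mod_dvd_ap: "m dvd (d::nat) \<Longrightarrow> (a + i*d) mod m = a mod m"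
proof -
  assume "m dvd d" then obtain t where "d = m*t" by (erule dvdE)
  then have "a + i*d = a + (i*t)*m" by simp
  then show ?thesis by (simp only:) (rule mod_mult_self1)
qed

lemma part1_set:
  assumes "m \<ge> 1" "no_nontriv_mono_AP_Zm m k f"
  shows "{(a,d). 1 \<le> a \<and> 1 \<le> d \<and> a + K*d \<le> n \<and> (\<forall>i<k. \<forall>j<k. f ((a+i*d) mod m) = f ((a+j*d) mod m))}
       = {(a,d). 1 \<le> a \<and> 1 \<le> d \<and> a + K*d \<le> n \<and> m dvd d}"
proof (rule set_eqI, rule iffI)
  fix x assume "x \<in> {(a,d). 1 \<le> a \<and> 1 \<le> d \<and> a + K*d \<le> n \<and> (\<forall>i<k. \<forall>j<k. f ((a+i*d) mod m) = f ((a+j*d) mod m))}"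
  then obtain a d where x: "x = (a,d)" "1 \<le> a" "1 \<le> d" "a + K*d \<le> n" "\<forall>i<k. \<forall>j<k. f ((a+i*d) mod m) = f ((a+j*d) mod m)" by auto
  have "m dvd d" using not_mono_Zm[OF assms(2,1) _ x(5)] by blast
  then show "x \<in> {(a,d). 1 \<le> a \<and> 1 \<le> d \<and> a + K*d \<le> n \<and> m dvd d}" using x by simp
next
  fix x assume "x \<in> {(a,d). 1 \<le> a \<and> 1 \<le> d \<and> a + K*d \<le> n \<and> m dvd d}"
  then obtain a d where x: "x = (a,d)" "1 \<le> a" "1 \<le> d" "a + K*d \<le> n" "m dvd d" by auto
  have "\<forall>i<k. \<forall>j<k. f ((a+i*d) mod m) = f ((a+j*d) mod m)"
  proof (intro allI impI)
    fix i j
    show "f ((a+i*d) mod m) = f ((a+j*d) mod m)" using mod_dvd_ap[OF x(5), of a i] mod_dvd_ap[OF x(5), of a j] by argo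
  qed
  then show "x \<in> {(a,d). 1 \<le> a \<and> 1 \<le> d \<and> a + K*d \<le> n \<and> (\<forall>i<k. \<forall>j<k. f ((a+i*d) mod m) = f ((a+j*d) mod m))}"
    unfolding x(1) mem_Collect_eq case_prod_conv using x(2-4) by blast
qed



lemma part2_rec:
  fixes m k r :: nat and f :: "nat \<Rightarrow> nat"
  assumes m2: "m \<ge> 2" and k2: "k \<ge> 2" and fr: "\<forall>x\<in>{1..<m}. f x < r" and r0: "r > 0"
    and nm: "\<forall>c<r. no_nontriv_mono_AP_Zm m k (f(0:=c))"
  defines "M \<equiv> \<lambda>n. {(a,d). 1 \<le> a \<and> 1 \<le> d \<and> a + (k-1)*d \<le> n \<and>
                   (\<forall>i<k. \<forall>j<k. g2 m f (a+i*d) = g2 m f (a+j*d))}"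
  shows "card (M n) + Sc (k-1) (n div m) = Sc ((k-1)*m) n + card (M (n div m))"
proof -
  let ?G = "g2 m f"
  define D where "D = {(a,d). 1 \<le> a \<and> 1 \<le> d \<and> a + (k-1)*d \<le> n \<and> m dvd d}"
  define DD where "DD = {(a,d). 1 \<le> a \<and> 1 \<le> d \<and> a + (k-1)*d \<le> n \<and> m dvd a \<and> m dvd d}"
  define h where "h = (\<lambda>(a::nat,d::nat). (m*a, m*d))"
  have K1: "k - 1 \<ge> 1" using k2 by simp
  have m1: "m \<ge> 1" using m2 by simp
  have le: "(m*x \<le> n) = (x \<le> n div m)" for x
    using m1 by (simp add: less_eq_div_iff_mult_less_eq mult.commute)
  have split: "M n = (D - DD) \<union> h ` M (n div m)"
  proof (rule subset_antisym; rule subsetI)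
    fix x assume "x \<in> M n"
    then obtain a d where x: "x = (a,d)" "1 \<le> a" "1 \<le> d" "a + (k-1)*d \<le> n"
      and mono: "\<forall>i<k. \<forall>j<k. ?G (a+i*d) = ?G (a+j*d)" unfolding M_def by auto
    have md: "m dvd d"
    proof (rule ccontr)
      assume nd: "\<not> m dvd d"
      define c where "c = ?G a"
      have cr: "c < r" unfolding c_def using g2_lt[OF fr r0] .
      have all: "(f(0:=c)) ((a+i*d) mod m) = c" if "i < k" for i
      proof (cases "(a+i*d) mod m = 0")
        case True then show ?thesis by simp
      next
        case False
        have k0: "0 < k" using k2 by simp
        have "?G (a+i*d) = ?G (a + 0*d)" using mono that k0 by blast
        then have "?G (a+i*d) = c" unfolding c_def by simp
        moreover have "?G (a+i*d) = f ((a+i*d) mod m)" using g2_nz[OF _ m2 False] x(2) by simp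
        ultimately show ?thesis using False by simp
      qed
      have "\<forall>i<k. \<forall>j<k. (f(0:=c)) ((a+i*d) mod m) = (f(0:=c)) ((a+j*d) mod m)"
        using all by simp
      from not_mono_Zm[OF nm[rule_format, OF cr] m1 nd this] show False .
    qed
    show "x \<in> (D - DD) \<union> h ` M (n div m)"
    proof (cases "m dvd a")
      case False then show ?thesis using x md unfolding D_def DD_def by auto
    next
      case True
      obtain s where s: "a = m*s" using True by (erule dvdE)
      obtain t where t: "d = m*t" using md by (erule dvdE)
      have s1: "1 \<le> s" using x s by (cases s) auto
      have t1: "1 \<le> t" using x t by (cases t) auto
      have "m*(s + (k-1)*t) \<le> n" using x s t by (simp add: algebra_simps)
      then have b: "s + (k-1)*t \<le> n div m" using le by simp
      have gg: "?G (a + i*d) = ?G (s + i*t)" for i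
      proof -
        have "a + i*d = m*(s+i*t)" using s t by (simp add: algebra_simps)
        then show ?thesis using g2_mult[OF _ m2, of "s+i*t" f] s1 by simp
      qed
      have mono': "\<forall>i<k. \<forall>j<k. ?G (s+i*t) = ?G (s+j*t)" using mono by (simp only: gg)
      have "(s,t) \<in> M (n div m)" unfolding M_def mem_Collect_eq case_prod_conv using s1 t1 b mono' by blast
      moreover have "x = h (s,t)" unfolding h_def using x s t by simp
      ultimately show ?thesis by blast
    qed
  next
    fix x assume "x \<in> (D - DD) \<union> h ` M (n div m)"
    then consider "x \<in> D - DD" | "x \<in> h ` M (n div m)" by blast
    then show "x \<in> M n"
    proof cases
      case 1
      then obtain a d where x: "x = (a,d)" "1 \<le> a" "1 \<le> d" "a + (k-1)*d \<le> n" "m dvd d" "\<not> m dvd a"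
        unfolding D_def DD_def by auto
      have nz: "a mod m \<noteq> 0" using x(6) mod_eq_0_iff_dvd by blast
      have "?G (a+i*d) = f (a mod m)" for i
        using g2_nz[OF _ m2, of "a+i*d" f] mod_dvd_ap[OF x(5), of a i] nz x(2) by simp
      then show ?thesis unfolding M_def using x by simp
    next
      case 2
      then obtain p where p: "p \<in> M (n div m)" "x = h p" by blast
      obtain s t where pst: "p = (s,t)" by (cases p)
      have "1 \<le> s \<and> 1 \<le> t \<and> s + (k-1)*t \<le> n div m \<and> (\<forall>i<k. \<forall>j<k. ?G (s+i*t) = ?G (s+j*t))"
        using p(1) unfolding pst M_def mem_Collect_eq case_prod_conv by blast
      then have x2: "1 \<le> s" "1 \<le> t" "s + (k-1)*t \<le> n div m"
        and mono: "\<forall>i<k. \<forall>j<k. ?G (s+i*t) = ?G (s+j*t)" by blast+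
      have x1: "x = (m*s, m*t)" using p(2) pst unfolding h_def by simp
      note x = x1 x2
      have gg: "?G (m*s + i*(m*t)) = ?G (s + i*t)" for i
      proof -
        have "m*s + i*(m*t) = m*(s+i*t)" by (simp add: algebra_simps)
        then show ?thesis using g2_mult[OF _ m2, of "s+i*t" f] x(2) by simp
      qed
      have "m*(s + (k-1)*t) \<le> n" using le x(4) by simp
      then have "m*s + (k-1)*(m*t) \<le> n" by (simp add: algebra_simps)
      moreover have "1 \<le> m*s" "1 \<le> m*t" using x m1 by simp_all
      moreover have "\<forall>i<k. \<forall>j<k. ?G (m*s+i*(m*t)) = ?G (m*s+j*(m*t))" unfolding gg by (rule mono)
      ultimately show ?thesis unfolding x(1) M_def mem_Collect_eq case_prod_conv by blast
    qed
  qed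
  have fD: "finite D" unfolding D_def
    by (rule finite_subset[OF _ fin_pairs[OF K1, of n "\<lambda>a d. True"]]) auto
  have sub: "DD \<subseteq> D" unfolding D_def DD_def by auto
  have fM: "finite (M (n div m))" unfolding M_def
    by (rule finite_subset[OF _ fin_pairs[OF K1, of "n div m" "\<lambda>a d. True"]]) auto
  have dis: "(D - DD) \<inter> h ` M (n div m) = {}" unfolding D_def DD_def h_def by auto
  have inj: "inj_on h X" for X using m1 unfolding h_def by (auto simp: inj_on_def)
  have "card (M n) = card (D - DD) + card (M (n div m))"
    unfolding split using fD fM dis card_image[OF inj] by (simp add: card_Un_disjoint)
  moreover have "card (D - DD) = card D - card DD" using fD sub by (simp add: card_Diff_subset finite_subset)
  moreover have "card DD \<le> card D" using fD sub by (simp add: card_mono)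
  moreover have "card D = Sc ((k-1)*m) n" unfolding D_def using D_card[OF m1 K1] .
  moreover have "card DD = Sc (k-1) (n div m)" unfolding DD_def using DD_card[OF m1 K1] .
  ultimately show ?thesis by linarith
qed



lemma B_eq:
  fixes n q mr Kr p :: real
  assumes "Kr \<noteq> 0" "mr \<noteq> 0" "p \<noteq> 0" "p = mr + 1"
  shows "n^2/(2*Kr*mr) - q^2/(2*Kr) + q^2/(2*p*Kr) - n^2/(2*p*Kr) = (n^2 - (mr*q)^2)/(2*Kr*mr*p)"
proof -
  have "n^2/(2*Kr*mr) - q^2/(2*Kr) + q^2/(2*p*Kr) - n^2/(2*p*Kr)
      = (n^2*p - q^2*mr*p + q^2*mr - n^2*mr)/(2*Kr*mr*p)"
    using assms(1-3) by (simp add: field_simps)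
  also have "n^2*p - q^2*mr*p + q^2*mr - n^2*mr = n^2 - (mr*q)^2"
    using assms(4) by (simp add: algebra_simps power2_eq_square)
  finally show ?thesis .
qed

lemma B_bound:
  fixes n q mr Kr :: real
  assumes "mr \<ge> 2" "Kr \<ge> 1" "mr * q \<le> n" "n - mr*q \<le> mr" "q \<ge> 0"
  shows "0 \<le> n^2/(2*Kr*mr) - q^2/(2*Kr) + q^2/(2*(mr+1)*Kr) - n^2/(2*(mr+1)*Kr)
       \<and> n^2/(2*Kr*mr) - q^2/(2*Kr) + q^2/(2*(mr+1)*Kr) - n^2/(2*(mr+1)*Kr) \<le> n"
proof -
  define u where "u = mr*q"
  define D where "D = 2*Kr*mr*(mr+1)"
  have Dp: "D > 0" unfolding D_def using assms by simp
  have eq: "n^2/(2*Kr*mr) - q^2/(2*Kr) + q^2/(2*(mr+1)*Kr) - n^2/(2*(mr+1)*Kr) = (n^2 - u^2)/D"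
    unfolding u_def D_def using assms by (intro B_eq) auto
  have u0: "0 \<le> u" unfolding u_def using assms by simp
  have f: "n^2 - u^2 = (n-u)*(n+u)" by (simp add: algebra_simps power2_eq_square)
  have uq: "0 \<le> mr*q" using assms by simp
  have a1: "0 \<le> n - u" "n - u \<le> mr" "0 \<le> n + u" "n + u \<le> 2*n" using assms uq unfolding u_def by linarith+
  have "(n-u)*(n+u) \<le> mr*(2*n)" using mult_mono[OF a1(2) a1(4)] a1 assms by simp
  moreover have "0 \<le> (n-u)*(n+u)" using a1 by simp
  ultimately have n1: "0 \<le> n^2 - u^2" "n^2 - u^2 \<le> 2*mr*n" unfolding f by auto
  have n0: "n \<ge> 0" using a1 u0 by linarith
  have "1*1 \<le> Kr*(mr+1)" using assms by (intro mult_mono) auto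
  then have "1 \<le> Kr*(mr+1)" by simp
  then have "2*mr*n*1 \<le> 2*mr*n*(Kr*(mr+1))" using n0 assms by (intro mult_left_mono) auto
  then have "2*mr*n \<le> n*D" unfolding D_def by (simp add: algebra_simps)
  then have "n^2 - u^2 \<le> n*D" using n1 by linarith
  then have "(n^2 - u^2)/D \<le> n" using Dp by (simp add: divide_le_eq)
  moreover have "0 \<le> (n^2 - u^2)/D" using Dp n1 by simp
  ultimately show ?thesis unfolding eq by simp
qed



theorem mainTheorem2:
  fixes r k m :: nat
  assumes "r \<ge> 2" and "k \<ge> 3" and "m \<ge> 2"
  shows "((\<exists>f. (\<forall>x<m. f x < r) \<and> no_nontriv_mono_AP_Zm m k f) \<longrightarrow>
           (\<exists>C::real. \<forall>n::nat. \<exists>g. (\<forall>x\<in>{1..n}. g x < r) \<and>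
              \<bar>real (mono_AP_count n k g) - (real n)^2 / (2 * real m * (real k - 1))\<bar> \<le> C * real n))
       \<and> ((\<exists>f. (\<forall>x\<in>{1..<m}. f x < r) \<and> (\<forall>c<r. no_nontriv_mono_AP_Zm m k (f(0 := c)))) \<longrightarrow>
           (\<exists>C::real. \<forall>n::nat. \<exists>g. (\<forall>x\<in>{1..n}. g x < r) \<and>
              \<bar>real (mono_AP_count n k g) - (real n)^2 / (2 * (real m + 1) * (real k - 1))\<bar> \<le> C * real n))"
proof -
  have K1: "k - 1 \<ge> 1" using assms by simp
  have m1: "m \<ge> 1" using assms by simp
  have Kr: "real k - 1 = real (k-1)" using assms by (simp add: of_nat_diff)
  have P1: "\<exists>C::real. \<forall>n::nat. \<exists>g. (\<forall>x\<in>{1..n}. g x < r) \<and>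
              \<bar>real (mono_AP_count n k g) - (real n)^2 / (2 * real m * (real k - 1))\<bar> \<le> C * real n"
    if "\<exists>f. (\<forall>x<m. f x < r) \<and> no_nontriv_mono_AP_Zm m k f"
  proof -
    from that obtain f where fr: "\<forall>x<m. f x < r" and nm: "no_nontriv_mono_AP_Zm m k f" by blast
    have "\<exists>g. (\<forall>x\<in>{1..n}. g x < r) \<and>
              \<bar>real (mono_AP_count n k g) - (real n)^2 / (2 * real m * (real k - 1))\<bar> \<le> 2 * real n" for n
    proof (intro exI conjI)
      show "\<forall>x\<in>{1..n}. f (x mod m) < r" using fr m1 by simp
      have cnt: "mono_AP_count n k (\<lambda>x. f (x mod m)) = Sc ((k-1)*m) n"
        unfolding mono_AP_count_def part1_set[OF m1 nm] D_card[OF m1 K1] by (rule refl)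
      have e: "2 * real m * (real k - 1) = 2 * real ((k-1)*m)" unfolding Kr by simp
      show "\<bar>real (mono_AP_count n k (\<lambda>x. f (x mod m))) - (real n)^2 / (2 * real m * (real k - 1))\<bar> \<le> 2 * real n"
        unfolding cnt e using Sc_abs[of "(k-1)*m" n] K1 m1 by simp
    qed
    then show ?thesis by blast
  qed
  have P2: "\<exists>C::real. \<forall>n::nat. \<exists>g. (\<forall>x\<in>{1..n}. g x < r) \<and>
              \<bar>real (mono_AP_count n k g) - (real n)^2 / (2 * (real m + 1) * (real k - 1))\<bar> \<le> C * real n"
    if "\<exists>f. (\<forall>x\<in>{1..<m}. f x < r) \<and> (\<forall>c<r. no_nontriv_mono_AP_Zm m k (f(0 := c)))"
  proof -
    from that obtain f where fr: "\<forall>x\<in>{1..<m}. f x < r" and nm: "\<forall>c<r. no_nontriv_mono_AP_Zm m k (f(0 := c))" by blast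
    have r0: "r > 0" using assms by simp
    have k2: "k \<ge> 2" using assms by simp
    define G where "G = g2 m f"
    define N where "N = (\<lambda>n. mono_AP_count n k G)"
    have rec: "N n + Sc (k-1) (n div m) = Sc ((k-1)*m) n + N (n div m)" for n
      using part2_rec[OF assms(3) k2 fr r0 nm, of n] unfolding N_def G_def mono_AP_count_def .
    define Kq where "Kq = real (k-1)"
    define mr where "mr = real m"
    have Kq1: "Kq \<ge> 1" unfolding Kq_def using K1 by simp
    have mr2: "mr \<ge> 2" unfolding mr_def using assms by simp
    have main: "\<bar>real (N n) - (real n)^2 / (2 * (mr + 1) * Kq)\<bar> \<le> 10 * real n" for n
    proof (induction n rule: less_induct)
      case (less n)
      show ?case
      proof (cases "n = 0")
        case True
        have "{(a, d). 1 \<le> a \<and> 1 \<le> d \<and> a + (k - 1) * d \<le> (0::nat) \<and> (\<forall>i<k. \<forall>j<k. G (a + i * d) = G (a + j * d))} = {}"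
          by auto
        then have "N n = 0" unfolding N_def mono_AP_count_def True by (simp only:) simp
        then show ?thesis using True by simp
      next
        case False
        define q where "q = n div m"
        have qn: "q < n" unfolding q_def using False assms by simp
        have IH: "\<bar>real (N q) - (real q)^2 / (2 * (mr + 1) * Kq)\<bar> \<le> 10 * real q" using less qn by blast
        have r: "real (N n) + real (Sc (k-1) q) = real (Sc ((k-1)*m) n) + real (N q)"
          using rec[of n] unfolding q_def[symmetric] by (metis of_nat_add)
        have E1: "\<bar>real (Sc ((k-1)*m) n) - (real n)^2 / (2 * Kq * mr)\<bar> \<le> 2 * real n"
          using Sc_abs[of "(k-1)*m" n] K1 m1 unfolding Kq_def mr_def by (simp add: mult.commute mult.left_commute)
        have E2: "\<bar>real (Sc (k-1) q) - (real q)^2 / (2 * Kq)\<bar> \<le> 2 * real q"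
          using Sc_abs[of "k-1" q] K1 unfolding Kq_def by simp
        have qm1: "m * q \<le> n" unfolding q_def by simp
        have mm: "n mod m < m" using m1 by simp
        have dm: "m * q + n mod m = n" unfolding q_def by (metis div_mult_mod_eq mult.commute)
        have qm2: "n < m * q + m" using mm dm by linarith
        have a1: "mr * real q \<le> real n" unfolding mr_def using qm1 by (metis of_nat_le_iff of_nat_mult)
        have "real n < real (m * q + m)" using qm2 by (simp only: of_nat_less_iff)
        then have "real n < mr * real q + mr" unfolding mr_def by simp
        then have a2: "real n - mr * real q \<le> mr" by linarith
        have "2 * real q \<le> mr * real q" using mr2 by (intro mult_right_mono) auto
        then have q2: "2 * real q \<le> real n" using a1 by linarith
        have B: "0 \<le> (real n)^2/(2*Kq*mr) - (real q)^2/(2*Kq) + (real q)^2/(2*(mr+1)*Kq) - (real n)^2/(2*(mr+1)*Kq)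
              \<and> (real n)^2/(2*Kq*mr) - (real q)^2/(2*Kq) + (real q)^2/(2*(mr+1)*Kq) - (real n)^2/(2*(mr+1)*Kq) \<le> real n"
          using B_bound[OF mr2 Kq1 a1 a2] by simp
        show ?thesis using r E1 E2 IH B q2 unfolding abs_le_iff by linarith
      qed
    qed
    have "\<exists>g. (\<forall>x\<in>{1..n}. g x < r) \<and>
              \<bar>real (mono_AP_count n k g) - (real n)^2 / (2 * (real m + 1) * (real k - 1))\<bar> \<le> 10 * real n" for n
    proof (intro exI conjI)
      show "\<forall>x\<in>{1..n}. G x < r" unfolding G_def using g2_lt[OF fr r0] by blast
      show "\<bar>real (mono_AP_count n k G) - (real n)^2 / (2 * (real m + 1) * (real k - 1))\<bar> \<le> 10 * real n"
        using main[of n] unfolding N_def Kq_def mr_def Kr .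
    qed
    then show ?thesis by blast
  qed
  show ?thesis using P1 P2 by blast
qed

end
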